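(* Let $n>2$ be an integer, $q=2^n$, $a_1\in\mathbb{F}_q^{*}$, $a_2,a_3\in\mathbb{F}_{q^2}^{*}$ with $a_1,a_2,a_3$ pairwise different and $a_1+a_2+a_3\neq0$, and let $b\in\mathbb{F}_{q^2}^{*}$. For $i=1,2,3$ let $f_i(x)=\mathrm{Tr}_1^{2n}\!\left(\frac{a_i}{x^{q-1}+b}\right)$ for $x\in\mathbb{F}_{q^2}$, and let $h_3=f_1f_2+f_1f_3+f_2f_3$. Then $h_3$ is bent if one of the following conditions holds: (1) $b=1$, $a_2\in\mathbb{F}_q^{*}$, $a_3\notin\mathbb{F}_q$, and $\mathrm{Tr}_1^n(a_1+a_2)=1$; (2) $b=1$, $a_2\notin\mathbb{F}_q$, $a_3\notin\mathbb{F}_q$, $a_2+a_3\in\mathbb{F}_q$, $\mathrm{Tr}_1^n(a_2+a_3)=0$ and $\mathrm{Tr}_1^{2n}(a_2)=0$; (3) $b\in U\setminus\{1\}$, $\mathrm{Tr}_n^{2n}(a_2\overline{b})=\mathrm{Tr}_n^{2n}(a_3\overline{b})=0$, $\mathrm{Tr}_1^n(a_2\overline{a_2}+a_3\overline{a_3})=1$ and $h_3(0)=0$; (4) $b\in U\setminus\{1\}$, $\mathrm{Tr}_n^{2n}(a_2\overline{b})=0$, $\mathrm{Tr}_n^{2n}(a_3\overline{b})\neq0$, $\mathrm{Tr}_n^{2n}((a_1+a_2+a_3)\overline{b})=0$, $\mathrm{Tr}_1^n(a_2\overline{a_2})=\mathrm{Tr}_1^n((a_1+a_2+a_3)(a_1+\overline{a_2}+\overline{a_3}))$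 and $h_3(0)=0$; (5) $b\in U\setminus\{1\}$, $\mathrm{Tr}_n^{2n}(a_2\overline{b})\neq0$, $\mathrm{Tr}_n^{2n}(a_3\overline{b})\neq0$, $\mathrm{Tr}_n^{2n}((a_1+a_2+a_3)\overline{b})\neq0$ and $h_3(0)=0$; (6) $b\notin U$ and $2(-1)^{h_3(0)}=2(-1)^{u(a_1)u(a_2)+u(a_1)u(a_3)+u(a_2)u(a_3)}+(-1)^{u(a_1+a_2+a_3)}k(a_1+a_2+a_3)-\sum_{i=1}^{3}(-1)^{u(a_i)}k(a_i)$, where $k(x)=\mathcal{K}_n\!\left(\frac{x\overline{x}}{1+b^2\overline{b}^2}\right)$ and $u(x)=\mathrm{Tr}_1^{2n}\!\left(\frac{\overline{x}b}{1+b\overline{b}}\right)$.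
   Context: For $k\mid m$, $\mathrm{Tr}_k^{m}(x)=x+x^{2^k}+\cdots+x^{2^{(m/k-1)k}}$ is the trace from $\mathbb{F}_{2^m}$ to $\mathbb{F}_{2^k}$. For $x\in\mathbb{F}_{q^2}$ write $\overline{x}=x^{q}$. The unit circle is $U=\{\eta\in\mathbb{F}_{q^2}:\eta^{q+1}=1\}$. Division by zero is interpreted with the convention $\frac{1}{0}=0$. The binary Kloosterman sum is $\mathcal{K}_n(a)=\sum_{x\in\mathbb{F}_{2^n}}(-1)^{\mathrm{Tr}_1^n(\frac1x+ax)}$ (with $\frac10=0$). Values in $\mathbb{F}_2$ appearing in exponents of $-1$ are identified with $0,1\in\mathbb{Z}$. A Boolean function $f:\mathbb{F}_{2^{m}}\to\mathbb{F}_2$ is bent if its Walsh transform $W_f(\omega)=\sum_{x\in\mathbb{F}_{2^m}}(-1)^{f(x)+\mathrm{Tr}_1^m(\omega x)}$ satisfies $W_f(\omega)^2=2^m$ for all $\omega\in\mathbb{F}_{2^m}$. *)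

theory Defs
  imports Main
begin

text \<open>The field F_{q^2}, q = 2^n, is modelled as a finite field type 'a with
  CARD('a) = 2^(2n). Subfields are described inside it.\<close>

definition tr :: "nat \<Rightarrow> nat \<Rightarrow> 'a::comm_ring_1 \<Rightarrow> 'a" where
  "tr k m x = (\<Sum>i<m div k. x ^ (2 ^ (k * i)))"

text \<open>(-1)^y for y in F_2 (embedded as 0,1 in the field).\<close>
definition chi :: "'a::zero \<Rightarrow> int" where
  "chi y = (if y = 0 then 1 else -1)"

definition Fq :: "nat \<Rightarrow> 'a::comm_ring_1 set" where
  "Fq n = {x. x ^ (2 ^ n) = x}"

definition cj :: "nat \<Rightarrow> 'a::comm_ring_1 \<Rightarrow> 'a" where
  "cj n x = x ^ (2 ^ n)"

definition unit_circle :: "nat \<Rightarrow> 'a::comm_ring_1 set" where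
  "unit_circle n = {x. x ^ (2 ^ n + 1) = 1}"

definition walsh :: "nat \<Rightarrow> ('a::{comm_ring_1,finite} \<Rightarrow> 'a) \<Rightarrow> 'a \<Rightarrow> int" where
  "walsh m f w = (\<Sum>x\<in>UNIV. chi (f x + tr 1 m (w * x)))"

definition bent :: "nat \<Rightarrow> ('a::{comm_ring_1,finite} \<Rightarrow> 'a) \<Rightarrow> bool" where
  "bent m f \<longleftrightarrow> (\<forall>w. (walsh m f w)\<^sup>2 = 2 ^ m)"

text \<open>Binary Kloosterman sum over F_{2^n} (subfield of 'a); inverse 0 = 0.\<close>
definition kloost :: "nat \<Rightarrow> 'a::field \<Rightarrow> int" where
  "kloost n a = (\<Sum>x\<in>Fq n. chi (tr 1 n (inverse x + a * x)))"

text \<open>f_i(x) = Tr_1^{2n}(a / (x^(q-1) + b)), with a/0 = 0.\<close>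
definition ff :: "nat \<Rightarrow> 'a::field \<Rightarrow> 'a \<Rightarrow> 'a \<Rightarrow> 'a" where
  "ff n a b x = tr 1 (2 * n) (a / (x ^ (2 ^ n - 1) + b))"

definition h3 :: "nat \<Rightarrow> 'a::field \<Rightarrow> 'a \<Rightarrow> 'a \<Rightarrow> 'a \<Rightarrow> 'a \<Rightarrow> 'a" where
  "h3 n a1 a2 a3 b x =
     ff n a1 b x * ff n a2 b x + ff n a1 b x * ff n a3 b x + ff n a2 b x * ff n a3 b x"

end

theory Submission
  imports Defs "HOL-Computational_Algebra.Polynomial"
begin



declare One_nat_def[simp del]

definition isb :: "'a::zero_neq_one \<Rightarrow> bool" where "isb x \<longleftrightarrow> x = 0 \<or> x = 1"

locale gf =
  fixes n :: nat and dummy :: "'a::{field,finite}"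
  assumes n2: "n > 2" and cardF: "card (UNIV::'a set) = 2^(2*n)"
begin

lemma char2: "(2::'a) = 0"
proof -
  have "(\<Sum>x\<in>UNIV. x + 1) = (\<Sum>x\<in>UNIV. (x::'a))"
    by (rule sum.reindex_bij_witness[of _ "\<lambda>x. x - 1" "\<lambda>x. x+1"]) auto
  hence "of_nat (card (UNIV::'a set)) = (0::'a)" by (simp add: sum.distrib)
  hence "(2::'a)^(2*n) = 0" using cardF by simp
  thus ?thesis by simp
qed

lemma add_self[simp]: "(x::'a) + x = 0"
proof -
  have "x + x = 2 * x" by simp
  thus ?thesis using char2 by simp
qed

lemma minus_eq[simp]: "- (x::'a) = x"
  by (metis add_self add_right_cancel neg_eq_iff_add_eq_0)

lemma diff_eq[simp]: "(x::'a) - y = x + y"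
  by (metis diff_conv_add_uminus minus_eq)

lemma sq_add: "((x::'a)+y)^2 = x^2+y^2"
proof -
  have "(x+y)^2 = x^2 + y^2 + 2*x*y" by (simp add: power2_sum)
  thus ?thesis using char2 by simp
qed

lemma pow2k_add: "((x::'a)+y)^(2^k) = x^(2^k) + y^(2^k)"
proof (induction k)
  case 0 then show ?case by simp
next
  case (Suc k)
  have "(x+y)^(2^Suc k) = ((x+y)^(2^k))^2" by (simp add: power_mult[symmetric] mult.commute)
  also have "\<dots> = (x^(2^k))^2 + (y^(2^k))^2" using Suc sq_add by simp
  also have "\<dots> = x^(2^Suc k) + y^(2^Suc k)" by (simp add: power_mult[symmetric] mult.commute)
  finally show ?case .
qed

lemma pow2k_sum: "(\<Sum>i\<in>A. f i :: 'a)^(2^k) = (\<Sum>i\<in>A. f i ^ (2^k))"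
proof (cases "finite A")
  case True then show ?thesis by (induction A rule: finite_induct) (auto simp: pow2k_add)
qed simp

lemma fermat: "(x::'a)^(2^(2*n)) = x"
proof (cases "x = 0")
  case True then show ?thesis by simp
next
  case False
  let ?N = "UNIV - {0::'a}"
  have "(\<Prod>y\<in>?N. x * y) = (\<Prod>y\<in>?N. y)"
    by (rule prod.reindex_bij_witness[of _ "\<lambda>y. y / x" "\<lambda>y. x * y"]) (use False in auto)
  hence "x ^ card ?N * (\<Prod>y\<in>?N. y) = (\<Prod>y\<in>?N. y)" by (simp add: prod.distrib)
  moreover have "(\<Prod>y\<in>?N. y) \<noteq> 0" by simp
  ultimately have "x ^ card ?N = 1" by simp
  moreover have "card ?N = 2^(2*n) - 1" using cardF by (simp add: card_Diff_subset)
  ultimately have "x ^ (2^(2*n) - 1) = 1" by simp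
  hence "x * x ^ (2^(2*n) - 1) = x" by simp
  moreover have "x * x ^ (2^(2*n) - 1) = x ^ (2^(2*n))"
    by (simp add: power_Suc[symmetric])
  ultimately show ?thesis by (metis mult_1_right)
qed

end



lemma sum_lessThan_split: "(\<Sum>i<m+(k::nat). f i) = (\<Sum>i<m. f i) + (\<Sum>i<k. f (m+i))"
  by (induction k) (simp_all add: add.assoc)

lemma chi_vals: "chi x = 1 \<or> chi x = -1" by (simp add: chi_def)
lemma chi_sq[simp]: "chi x * chi x = 1" by (simp add: chi_def)
lemma chi0[simp]: "chi 0 = 1" by (simp add: chi_def)
lemma chi1[simp]: "chi (1::'a::zero_neq_one) = -1" by (simp add: chi_def)

lemma isb_sq: "(t::'a::field)^2 = t \<Longrightarrow> isb t"
proof -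
  assume "t^2 = t"
  hence "t * (t - 1) = 0" by (simp add: power2_eq_square algebra_simps)
  thus "isb t" by (auto simp: isb_def)
qed

context gf begin

lemma chi_add: "isb (a::'a) \<Longrightarrow> isb b \<Longrightarrow> chi (a+b) = chi a * chi b"
  by (auto simp: isb_def chi_def)

lemma isb_add: "isb (a::'a) \<Longrightarrow> isb b \<Longrightarrow> isb (a+b)"
  by (auto simp: isb_def)
lemma isb_mult: "isb (a::'a) \<Longrightarrow> isb b \<Longrightarrow> isb (a*b)"
  by (auto simp: isb_def)

lemma tr1: "tr 1 m x = (\<Sum>i<m. x^(2^i))"
  by (simp add: tr_def)

lemma tr_add: "tr 1 m ((x::'a)+y) = tr 1 m x + tr 1 m y"
  unfolding tr1 by (simp add: pow2k_add sum.distrib)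

lemma tr_zero[simp]: "tr 1 m (0::'a) = 0"
  unfolding tr1 by (intro sum.neutral) simp

lemma tr_sq: "(tr 1 m (x::'a))^2 = tr 1 m x + x + x^(2^m)"
proof -
  have "(tr 1 m x)^2 = (\<Sum>i<m. x^(2^Suc i))"
    using pow2k_sum[of "\<lambda>i. x^(2^i)" "{..<m}" 1] unfolding tr1 by (simp add: power_mult[symmetric] mult.commute)
  moreover have "(\<Sum>i<Suc m. x^(2^i)) = x + (\<Sum>i<m. x^(2^Suc i))"
    by (subst sum.lessThan_Suc_shift) simp
  moreover have "(\<Sum>i<Suc m. x^(2^i)) = tr 1 m x + x^(2^m)"
    unfolding tr1 by simp
  ultimately have "(tr 1 m x)^2 + x = tr 1 m x + x^(2^m)" by (simp add: add.commute)
  hence "(tr 1 m x)^2 + x + x = tr 1 m x + x^(2^m) + x" by simp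
  thus ?thesis by (simp add: add.assoc add.left_commute)
qed

lemma tr_isb: "(x::'a)^(2^m) = x \<Longrightarrow> isb (tr 1 m x)"
  by (rule isb_sq) (simp only: tr_sq add.assoc add_self add_0_right)

lemma trF_isb: "isb (tr 1 (2*n) (x::'a))"
  by (rule tr_isb) (simp add: fermat)

lemma cj_add: "cj n ((x::'a)+y) = cj n x + cj n y" by (simp add: cj_def pow2k_add)
lemma cj_mult: "cj n ((x::'a)*y) = cj n x * cj n y" by (simp add: cj_def power_mult_distrib)
lemma cj_div: "cj n ((x::'a)/y) = cj n x / cj n y" by (simp add: cj_def power_divide)
lemma cj_0[simp]: "cj n (0::'a) = 0" by (simp add: cj_def)
lemma cj_1[simp]: "cj n (1::'a) = 1" by (simp add: cj_def)
lemma cj_cj[simp]: "cj n (cj n (x::'a)) = x"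
proof -
  have "cj n (cj n x) = x^(2^n*2^n)" by (simp add: cj_def power_mult)
  also have "2^n*2^n = (2::nat)^(2*n)" by (simp add: power_add[symmetric] mult_2)
  finally show ?thesis by (simp add: fermat)
qed
lemma cj_pow: "cj n ((x::'a)^k) = (cj n x)^k" by (simp add: cj_def power_mult[symmetric] mult.commute)
lemma cj_eq0[simp]: "cj n (x::'a) = 0 \<longleftrightarrow> x = 0" by (simp add: cj_def)

lemma Fq_iff: "x \<in> Fq n \<longleftrightarrow> cj n x = x" by (simp add: Fq_def cj_def)

lemma tr_rel: assumes "l \<in> Fq n"
  shows "tr 1 (2*n) (l * (z::'a)) = tr 1 n (l * (z + cj n z))"
proof -
  have l: "l^(2^n) = l" using assms by (simp add: Fq_def)
  have "tr 1 (2*n) (l*z) = (\<Sum>i<n. (l*z)^(2^i)) + (\<Sum>i<n. (l*z)^(2^(n+i)))"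
    by (simp add: tr1 mult_2 sum_lessThan_split)
  also have "(\<Sum>i<n. (l*z)^(2^(n+i))) = (\<Sum>i<n. (l*cj n z)^(2^i))"
  proof (rule sum.cong[OF refl])
    fix i
    have "(l*z)^(2^(n+i)) = ((l*z)^(2^n))^(2^i)" by (simp add: power_add power_mult)
    also have "(l*z)^(2^n) = l * cj n z" by (simp add: power_mult_distrib l cj_def)
    finally show "(l*z)^(2^(n+i)) = (l*cj n z)^(2^i)" .
  qed
  also have "(\<Sum>i<n. (l*z)^(2^i)) + (\<Sum>i<n. (l*cj n z)^(2^i)) = tr 1 n (l*z + l * cj n z)"
    by (simp add: tr1 pow2k_add sum.distrib)
  finally show ?thesis by (simp add: distrib_left)
qed

lemma trnn: "tr n (2*n) (x::'a) = x + cj n x"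
proof -
  have "2*n div n = 2" using n2 by simp
  thus ?thesis by (simp add: tr_def cj_def numeral_2_eq_2)
qed

lemma tr_cj: "tr 1 (2*n) (cj n (x::'a)) = tr 1 (2*n) x"
  using tr_rel[of 1 x] tr_rel[of 1 "cj n x"] by (simp add: Fq_def add.commute)

lemma trF_Fq: "x \<in> Fq n \<Longrightarrow> tr 1 (2*n) (x::'a) = 0"
  using tr_rel[of x 1] by (simp add: Fq_def)

lemma tr_Fq_isb: "x \<in> Fq n \<Longrightarrow> isb (tr 1 n (x::'a))"
  by (rule tr_isb) (simp add: Fq_def)

lemma tr_Fq_sq: assumes "x \<in> Fq n" shows "tr 1 n ((x::'a)^2) = tr 1 n x"
proof -
  have "tr 1 n (x^2) = (tr 1 n x)^2"
    using pow2k_sum[of "\<lambda>i. x^(2^i)" "{..<n}" 1]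
    by (simp add: tr1 power_mult[symmetric] mult.commute)
  also have "\<dots> = tr 1 n x" using tr_Fq_isb[OF assms] by (auto simp: isb_def)
  finally show ?thesis .
qed

lemma Fq_add: "x \<in> Fq n \<Longrightarrow> y \<in> Fq n \<Longrightarrow> (x::'a) + y \<in> Fq n" by (simp add: Fq_iff cj_add)
lemma Fq_mult: "x \<in> Fq n \<Longrightarrow> y \<in> Fq n \<Longrightarrow> (x::'a) * y \<in> Fq n" by (simp add: Fq_iff cj_mult)
lemma Fq_div: "x \<in> Fq n \<Longrightarrow> y \<in> Fq n \<Longrightarrow> (x::'a) / y \<in> Fq n" by (simp add: Fq_iff cj_div)
lemma Fq_0[simp]: "(0::'a) \<in> Fq n" by (simp add: Fq_iff)
lemma Fq_1[simp]: "(1::'a) \<in> Fq n" by (simp add: Fq_iff)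
lemma Fq_norm: "(x::'a) * cj n x \<in> Fq n" by (simp add: Fq_iff cj_mult mult.commute)
lemma Fq_trace: "(x::'a) + cj n x \<in> Fq n" by (simp add: Fq_iff cj_add add.commute)

lemma add_eq0: "(x::'a) + y = 0 \<longleftrightarrow> x = y"
  by (metis add_self add_right_cancel)

lemma Fq_iff2: "(x::'a) \<in> Fq n \<longleftrightarrow> x + cj n x = 0"
  by (auto simp: Fq_iff add_eq0)

lemma tr_Fq_mult_Fq: "l \<in> Fq n \<Longrightarrow> x \<in> Fq n \<Longrightarrow> tr 1 (2*n) (l * (x::'a)) = 0"
  using Fq_mult trF_Fq by blast

end



context gf begin

lemma root_bound: assumes "k \<ge> 1" shows "card {x::'a. x^k = c} \<le> k"
proof -
  define p where "p = monom (1::'a) k - [:c:]"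
  have pv: "poly p x = x^k - c" for x by (simp add: p_def poly_monom)
  have "coeff p k = 1" using assms by (cases k) (simp_all add: p_def)
  hence p0: "p \<noteq> 0" by auto
  have dg: "degree p \<le> k" unfolding p_def
    by (intro degree_diff_le degree_monom_le) auto
  have "{x::'a. x^k = c} = {x. poly p x = 0}" by (auto simp: pv add_eq0)
  also have "card \<dots> \<le> degree p" by (rule card_poly_roots_bound[OF p0])
  finally show ?thesis using dg by linarith
qed

lemma trpoly_bound: assumes "m \<ge> 1" shows "card {x::'a. tr 1 m x = 0} \<le> 2^(m-1)"
proof -
  define p where "p = (\<Sum>i<m. monom (1::'a) (2^i))"
  have pv: "poly p x = tr 1 m x" for x by (simp add: p_def poly_sum poly_monom tr1)
  have "coeff p (2^(m-1)) = (\<Sum>i<m. if i = m - 1 then 1 else 0)"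
    unfolding p_def coeff_sum coeff_monom by (intro sum.cong refl) (simp add: power_inject_exp)
  also have "\<dots> = 1" using assms by (subst sum.delta) auto
  finally have "p \<noteq> 0" by auto
  moreover have "degree p \<le> 2^(m-1)" unfolding p_def
    by (intro degree_sum_le) (auto intro!: order.trans[OF degree_monom_le] power_increasing)
  moreover have "{x::'a. tr 1 m x = 0} = {x. poly p x = 0}" by (auto simp: pv)
  ultimately show ?thesis using card_poly_roots_bound[of p] by simp
qed

lemma fiber_card:
  assumes "x0 \<noteq> (0::'a)"
  shows "card {x. x \<noteq> 0 \<and> x^k = x0^k} = card {x::'a. x \<noteq> 0 \<and> x^k = 1}"
proof -
  have "card {x. x \<noteq> 0 \<and> x^k = x0^k} = (\<Sum>x\<in>{x. x \<noteq> 0 \<and> x^k = x0^k}. 1)" by simp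
  also have "\<dots> = (\<Sum>x\<in>{x::'a. x \<noteq> 0 \<and> x^k = 1}. 1)"
    by (rule sum.reindex_bij_witness[of _ "\<lambda>x. x0 * x" "\<lambda>x. x / x0"])
       (use assms in \<open>auto simp: power_mult_distrib power_divide\<close>)
  also have "\<dots> = card {x::'a. x \<noteq> 0 \<and> x^k = 1}" by simp
  finally show ?thesis .
qed

lemma card_decomp:
  "card (UNIV - {0::'a}) = card ((\<lambda>x. x^k) ` (UNIV - {0::'a})) * card {x::'a. x \<noteq> 0 \<and> x^k = 1}"
proof -
  let ?N = "UNIV - {0::'a}"
  have "card ?N = (\<Sum>x\<in>?N. 1)" by simp
  also have "\<dots> = (\<Sum>y\<in>(\<lambda>x. x^k) ` ?N. (\<Sum>x\<in>{x. x \<in> ?N \<and> x^k = y}. 1))"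
    by (rule sum.image_gen) simp
  also have "\<dots> = (\<Sum>y\<in>(\<lambda>x. x^k) ` ?N. card {x::'a. x \<noteq> 0 \<and> x^k = 1})"
  proof (rule sum.cong[OF refl])
    fix y assume "y \<in> (\<lambda>x. x^k) ` ?N"
    then obtain x0 where x0: "x0 \<noteq> 0" "y = x0^k" by auto
    have "(\<Sum>x\<in>{x. x \<in> ?N \<and> x^k = y}. 1) = card {x. x \<noteq> 0 \<and> x^k = x0^k}"
      using x0 by simp
    also have "\<dots> = card {x::'a. x \<noteq> 0 \<and> x^k = 1}" by (rule fiber_card[OF x0(1)])
    finally show "(\<Sum>x\<in>{x. x \<in> ?N \<and> x^k = y}. 1) = card {x::'a. x \<noteq> 0 \<and> x^k = 1}" .
  qed
  also have "\<dots> = card ((\<lambda>x. x^k) ` ?N) * card {x::'a. x \<noteq> 0 \<and> x^k = 1}" by simp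
  finally show ?thesis .
qed

lemma q_ge: "(2::nat)^n \<ge> 8"
proof -
  have "(2::nat)^3 \<le> 2^n" using n2 by (intro power_increasing) auto
  thus ?thesis by simp
qed

lemma Q_eq: "(2::nat)^(2*n) - 1 = (2^n - 1) * (2^n + 1)"
proof -
  have "(2::nat)^(2*n) = 2^n * 2^n" by (simp add: mult_2 power_add)
  moreover have "(2^n - 1) * (2^n + 1) = (2::nat)^n * 2^n - 1" using q_ge
    by (simp add: algebra_simps diff_mult_distrib2 diff_mult_distrib)
  ultimately show ?thesis by simp
qed

lemma pow_Q1: "(x::'a) \<noteq> 0 \<Longrightarrow> x^(2^(2*n) - 1) = 1"
proof -
  assume x: "x \<noteq> 0"
  have "x * x^(2^(2*n) - 1) = x^(2^(2*n))" by (simp add: power_Suc[symmetric])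
  also have "\<dots> = x * 1" by (simp add: fermat)
  finally show ?thesis using x by simp
qed

lemma U_def': "unit_circle n = {x::'a. x \<noteq> 0 \<and> x^(2^n+1) = 1}"
  by (auto simp: unit_circle_def power_add)

lemma K1_eq: "{x::'a. x \<noteq> 0 \<and> x^(2^n-1) = 1} = Fq n - {0}"
proof -
  have "x^(2^n) = x * x^(2^n-1)" for x :: 'a
    using q_ge by (simp add: power_Suc[symmetric])
  thus ?thesis by (auto simp: Fq_def)
qed

lemma nat_sq_lemma:
  fixes a b A B :: nat
  assumes "a \<le> A" "b \<le> B" "A * B \<le> a * b" "A > 0" "B > 0"
  shows "a = A \<and> b = B"
proof -
  have "a > 0" "b > 0" using assms by (auto intro: ccontr)
  have "a * b \<le> A * b" using assms(1) by simp
  moreover have "A * b \<le> A * B" using assms(2) by simp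
  ultimately have e: "a * b = A * b" "A * b = A * B" using assms(3) by linarith+
  thus ?thesis using \<open>b > 0\<close> \<open>A > 0\<close> by simp
qed

lemma counts:
  "card (Fq n - {0::'a}) = 2^n - 1 \<and> card (unit_circle n :: 'a set) = 2^n + 1 \<and>
   (\<lambda>x. x^(2^n-1)) ` (UNIV - {0::'a}) = unit_circle n \<and>
   (\<lambda>x. x^(2^n+1)) ` (UNIV - {0::'a}) = Fq n - {0}"
proof -
  let ?N = "UNIV - {0::'a}"
  let ?K1 = "Fq n - {0::'a}" and ?U = "unit_circle n :: 'a set"
  let ?i1 = "(\<lambda>x. x^(2^n-1)) ` ?N" and ?i2 = "(\<lambda>x. x^(2^n+1)) ` ?N"
  have cN: "card ?N = (2^n - 1) * (2^n + 1)" using cardF Q_eq by (simp add: card_Diff_subset)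
  have d1: "card ?N = card ?i1 * card ?K1" using card_decomp[of "2^n-1"] K1_eq by simp
  have d2: "card ?N = card ?i2 * card ?U" using card_decomp[of "2^n+1"] U_def' by simp
  have cK1: "card ?K1 \<le> 2^n - 1"
  proof -
    have "card ?K1 \<le> card {x::'a. x^(2^n-1) = 1}" by (intro card_mono) (auto simp: K1_eq[symmetric])
    also have "\<dots> \<le> 2^n - 1" using q_ge by (intro root_bound) auto
    finally show ?thesis .
  qed
  have cU: "card ?U \<le> 2^n + 1"
    unfolding unit_circle_def by (intro root_bound) auto
  have i1: "?i1 \<subseteq> ?U"
  proof
    fix y assume "y \<in> ?i1"
    then obtain x where x: "x \<noteq> 0" "y = x^(2^n-1)" by auto
    have "y^(2^n+1) = x^((2^n-1)*(2^n+1))" using x by (simp add: power_mult)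
    also have "\<dots> = 1" using pow_Q1[OF x(1)] Q_eq by simp
    finally show "y \<in> ?U" by (simp add: unit_circle_def)
  qed
  have i2: "?i2 \<subseteq> ?K1"
  proof
    fix y assume "y \<in> ?i2"
    then obtain x where x: "x \<noteq> 0" "y = x^(2^n+1)" by auto
    have ex: "(2^n+1)*2^n = 2^(2*n) + (2::nat)^n" by (simp add: mult_2 power_add[symmetric] algebra_simps)
    have "y^(2^n) = x^((2^n+1)*2^n)" using x by (simp add: power_mult)
    also have "\<dots> = x^(2^(2*n)) * x^(2^n)" by (simp only: ex power_add)
    also have "\<dots> = y" using x by (simp only: fermat) (simp add: power_add mult.commute)
    finally show "y \<in> ?K1" using x by (simp add: Fq_def)
  qed
  have "card ?i1 \<le> card ?U" by (intro card_mono i1) auto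
  hence A: "(2^n - 1) * (2^n + 1) \<le> card ?U * card ?K1" using d1 cN by (metis mult_le_mono1)
  have "card ?i2 \<le> card ?K1" by (intro card_mono i2) auto
  have e: "card ?K1 = 2^n - 1 \<and> card ?U = 2^n + 1"
    using nat_sq_lemma[of "card ?K1" "2^n - 1" "card ?U" "2^n+1"] cK1 cU A q_ge
    by (simp add: mult.commute)
  have "card ?i1 = card ?U" using d1 cN e q_ge by simp
  hence "?i1 = ?U" using i1 by (intro card_subset_eq) auto
  moreover have "card ?i2 = card ?K1" using d2 cN e by simp
  hence "?i2 = ?K1" using i2 by (intro card_subset_eq) auto
  ultimately show ?thesis using e by simp
qed

lemma card_Fq: "card (Fq n :: 'a set) = 2^n"
proof -
  have "Fq n = insert (0::'a) (Fq n - {0})" by auto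
  hence "card (Fq n :: 'a set) = card (Fq n - {0::'a}) + 1"
    by (metis card_insert_disjoint finite Diff_iff insertI1 Suc_eq_plus1 finite_Diff)
  thus ?thesis using counts q_ge by simp
qed

lemma fib1: assumes "y \<in> unit_circle n"
  shows "card {x::'a. x \<noteq> 0 \<and> x^(2^n-1) = y} = 2^n - 1"
proof -
  obtain x0 where "x0 \<noteq> 0" "y = x0^(2^n-1)" using assms counts by (metis (no_types, lifting) DiffE imageE singletonI UNIV_I)
  thus ?thesis using fiber_card[of x0 "2^n-1"] K1_eq counts by simp
qed

lemma fib2: assumes "t \<in> Fq n" "t \<noteq> 0"
  shows "card {x::'a. x \<noteq> 0 \<and> x^(2^n+1) = t} = 2^n + 1"
proof -
  have "t \<in> (\<lambda>x. x^(2^n+1)) ` (UNIV - {0::'a})" using assms counts by auto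
  then obtain x0 where "x0 \<noteq> 0" "t = x0^(2^n+1)" by auto
  thus ?thesis using fiber_card[of x0 "2^n+1"] U_def' counts by simp
qed

lemma U_iff: "(y::'a) \<in> unit_circle n \<longleftrightarrow> y * cj n y = 1"
  by (simp add: unit_circle_def cj_def power_add mult.commute)

lemma norm_eq: "(x::'a) * cj n x = x^(2^n+1)"
  by (simp add: cj_def power_add)

end



lemma reidx:
  assumes "\<And>a. a \<in> S \<Longrightarrow> i (j a) = a" "\<And>a. a \<in> S \<Longrightarrow> j a \<in> T"
    "\<And>b. b \<in> T \<Longrightarrow> j (i b) = b" "\<And>b. b \<in> T \<Longrightarrow> i b \<in> S"
  shows "(\<Sum>a\<in>S. h (j a)) = (\<Sum>b\<in>T. h b)"
  by (rule sum.reindex_bij_witness[of S i j T h]) (use assms in auto)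

context gf begin

lemma char_sum_zero:
  fixes S :: "'a set"
  assumes "finite S" "\<And>x y. x \<in> S \<Longrightarrow> y \<in> S \<Longrightarrow> x + y \<in> S" "d \<in> S"
    "\<And>x. x \<in> S \<Longrightarrow> isb (T x)" "\<And>x y. T (x + y) = T x + (T y :: 'a)" "T d = 1"
  shows "(\<Sum>x\<in>S. chi (T x)) = 0"
proof -
  have "(\<Sum>x\<in>S. chi (T x)) = (\<Sum>x\<in>S. chi (T (x + d)))"
    by (rule sum.reindex_bij_witness[of _ "\<lambda>x. x + d" "\<lambda>x. x + d"])
       (use assms(2,3) in \<open>auto simp: add.assoc\<close>)
  also have "\<dots> = (\<Sum>x\<in>S. - chi (T x))"
    by (intro sum.cong refl) (use assms(4-6) in \<open>auto simp: isb_def chi_def add_eq0\<close>)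
  finally show ?thesis by (simp add: sum_negf)
qed

lemma exists_tr1_Fq: "\<exists>d\<in>Fq n. tr 1 n (d::'a) = 1"
proof (rule ccontr)
  assume "\<not> ?thesis"
  hence "Fq n \<subseteq> {x::'a. tr 1 n x = 0}" using tr_Fq_isb by (auto simp: isb_def)
  hence "card (Fq n :: 'a set) \<le> card {x::'a. tr 1 n x = 0}" by (intro card_mono) auto
  also have "\<dots> \<le> 2^(n-1)" using n2 by (intro trpoly_bound) auto
  finally have "(2::nat)^n \<le> 2^(n-1)" using card_Fq by metis
  moreover have "(2::nat)^(n-1) < 2^n" using n2 by (intro power_strict_increasing) auto
  ultimately show False by linarith
qed

lemma exists_tr1_F: "\<exists>d. tr 1 (2*n) (d::'a) = 1"
proof (rule ccontr)
  assume "\<not> ?thesis"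
  hence "(UNIV::'a set) \<subseteq> {x::'a. tr 1 (2*n) x = 0}" using trF_isb by (auto simp: isb_def)
  hence "card (UNIV :: 'a set) \<le> card {x::'a. tr 1 (2*n) x = 0}" by (intro card_mono) auto
  also have "\<dots> \<le> 2^(2*n-1)" using n2 by (intro trpoly_bound) auto
  finally have "(2::nat)^(2*n) \<le> 2^(2*n-1)" using cardF by metis
  moreover have "(2::nat)^(2*n-1) < 2^(2*n)" using n2 by (intro power_strict_increasing) auto
  ultimately show False by linarith
qed

lemma charFq: assumes "c \<in> Fq n"
  shows "(\<Sum>l\<in>Fq n. chi (tr 1 n (l * (c::'a)))) = (if c = 0 then 2^n else 0)"
proof (cases "c = 0")
  case True then show ?thesis using card_Fq by simp
next
  case False
  have "(\<Sum>l\<in>Fq n. chi (tr 1 n (l * c))) = (\<Sum>l\<in>Fq n. chi (tr 1 n (l::'a)))"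
    by (rule reidx[where h="\<lambda>l. chi (tr 1 n l)" and i="\<lambda>l. l / c"])
       (use False assms in \<open>auto simp: Fq_mult Fq_div\<close>)
  also have "\<dots> = 0"
  proof -
    obtain d :: 'a where "d \<in> Fq n" "tr 1 n d = 1" using exists_tr1_Fq by blast
    thus ?thesis by (intro char_sum_zero[of _ d]) (auto simp: Fq_add tr_Fq_isb tr_add)
  qed
  finally show ?thesis using False by simp
qed

lemma charF: "(\<Sum>x\<in>UNIV. chi (tr 1 (2*n) (c * (x::'a)))) = (if c = 0 then 2^(2*n) else 0)"
proof (cases "c = 0")
  case True then show ?thesis using cardF by simp
next
  case False
  have "(\<Sum>x\<in>UNIV. chi (tr 1 (2*n) (c * x))) = (\<Sum>x\<in>UNIV. chi (tr 1 (2*n) (x::'a)))"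
    by (rule reidx[where h="\<lambda>l. chi (tr 1 (2*n) l)" and i="\<lambda>l. l / c"]) (use False in auto)
  also have "\<dots> = 0"
  proof -
    obtain d :: 'a where "tr 1 (2*n) d = 1" using exists_tr1_F by blast
    thus ?thesis by (intro char_sum_zero[of _ d]) (auto simp: trF_isb tr_add)
  qed
  finally show ?thesis using False by simp
qed

lemma charFq': "(\<Sum>l\<in>Fq n - {0}. chi (tr 1 (2*n) (l * (z::'a)))) = (if z \<in> Fq n then 2^n - 1 else -1)"
proof -
  have "(\<Sum>l\<in>Fq n - {0}. chi (tr 1 (2*n) (l * z))) = (\<Sum>l\<in>Fq n. chi (tr 1 (2*n) (l * z))) - 1"
    by (subst sum_diff1) auto
  also have "(\<Sum>l\<in>Fq n. chi (tr 1 (2*n) (l * z))) = (\<Sum>l\<in>Fq n. chi (tr 1 n (l * (z + cj n z))))"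
    by (intro sum.cong refl) (simp add: tr_rel)
  also have "\<dots> = (if z + cj n z = 0 then 2^n else 0)" by (rule charFq[OF Fq_trace])
  finally show ?thesis by (simp add: Fq_iff2)
qed

end



context gf begin

lemma int_q1: "int (2^n - 1) = 2^n - 1"
  using q_ge by (simp add: of_nat_diff)

lemma cardFq'_int: "int (card (Fq n - {0::'a})) = 2^n - 1"
proof -
  have "card (Fq n - {0::'a}) = 2^n - 1" using counts by blast
  thus ?thesis using int_q1 by metis
qed

lemma Fq'_pow: "l \<in> Fq n - {0} \<Longrightarrow> (l::'a)^(2^n-1) = 1"
  using K1_eq by auto

lemma sum_fibers:
  fixes G :: "'a \<Rightarrow> 'a"
  shows "(\<Sum>x\<in>UNIV - {0}. chi (G (x^(2^n-1)))) = (2^n - 1) * (\<Sum>y\<in>unit_circle n. chi (G y))"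
proof -
  let ?N = "UNIV - {0::'a}"
  have "(\<Sum>x\<in>?N. chi (G (x^(2^n-1)))) =
      (\<Sum>y\<in>(\<lambda>x. x^(2^n-1)) ` ?N. (\<Sum>x\<in>{x. x \<in> ?N \<and> x^(2^n-1) = y}. chi (G (x^(2^n-1)))))"
    by (rule sum.image_gen) simp
  also have "\<dots> = (\<Sum>y\<in>unit_circle n. (2^n - 1) * chi (G y))"
  proof (rule sum.cong)
    show "(\<lambda>x. x^(2^n-1)) ` ?N = unit_circle n" using counts by simp
  next
    fix y :: 'a assume y: "y \<in> unit_circle n"
    have "(\<Sum>x\<in>{x. x \<in> ?N \<and> x^(2^n-1) = y}. chi (G (x^(2^n-1)))) =
          (\<Sum>x\<in>{x. x \<in> ?N \<and> x^(2^n-1) = y}. chi (G y))" by (intro sum.cong) auto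
    also have "\<dots> = int (card {x::'a. x \<noteq> 0 \<and> x^(2^n-1) = y}) * chi (G y)" by simp
    also have "\<dots> = (2^n - 1) * chi (G y)" using fib1[OF y] int_q1 by simp
    finally show "(\<Sum>x\<in>{x. x \<in> ?N \<and> x^(2^n-1) = y}. chi (G (x^(2^n-1)))) = (2^n - 1) * chi (G y)" .
  qed
  finally show ?thesis by (simp add: sum_distrib_left)
qed

end


context gf begin
lemma bent_crit:
  fixes G :: "'a \<Rightarrow> 'a"
  assumes isbG: "\<And>y. isb (G y)"
    and S: "(\<Sum>y\<in>unit_circle n. chi (G y)) = chi (G 0)"
  shows "bent (2*n) (\<lambda>x. G (x^(2^n-1)))"
  unfolding bent_def
proof
  fix w :: 'a
  let ?N = "UNIV - {0::'a}" and ?f = "\<lambda>x::'a. G (x^(2^n-1))"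
  let ?S = "\<Sum>y\<in>unit_circle n. chi (G y)"
  let ?q = "(2::int)^n"
  have qge: "(8::int) \<le> ?q"
  proof -
    have "int 8 \<le> int (2^n)" using q_ge by linarith
    thus ?thesis by simp
  qed
  hence q1: "?q - 1 \<noteq> 0" by linarith
  have "(2::nat)^n - 1 \<noteq> 0" using q_ge by linarith
  hence f0: "?f 0 = G 0" by (simp add: power_0_left)
  define R where "R = (\<Sum>x\<in>?N. chi (?f x) * chi (tr 1 (2*n) (w * x)))"
  have W: "walsh (2*n) ?f w = chi (G 0) + R"
  proof -
    have "walsh (2*n) ?f w = (\<Sum>x\<in>UNIV. chi (?f x) * chi (tr 1 (2*n) (w * x)))"
      unfolding walsh_def by (intro sum.cong refl chi_add isbG trF_isb)
    also have "\<dots> = chi (?f 0) * chi (tr 1 (2*n) (w * 0)) + R"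
      unfolding R_def by (subst sum.remove[of _ 0]) auto
    finally show ?thesis using f0 by simp
  qed
  have Rl: "R = (\<Sum>x\<in>?N. chi (?f x) * chi (tr 1 (2*n) (l * (w * x))))" if l: "l \<in> Fq n - {0}" for l
  proof -
    have "R = (\<Sum>x\<in>?N. chi (?f (l * x)) * chi (tr 1 (2*n) (w * (l * x))))"
      unfolding R_def
      by (rule reidx[where h="\<lambda>x. chi (?f x) * chi (tr 1 (2*n) (w * x))" and i="\<lambda>x. x / l", symmetric])
         (use l in auto)
    also have "\<dots> = (\<Sum>x\<in>?N. chi (?f x) * chi (tr 1 (2*n) (l * (w * x))))"
      by (intro sum.cong refl) (simp add: power_mult_distrib Fq'_pow[OF l] mult.left_commute)
    finally show ?thesis .
  qed
  have "(?q - 1) * R = (\<Sum>l\<in>Fq n - {0::'a}. R)"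
    by (simp only: sum_constant cardFq'_int)
  also have "\<dots> = (\<Sum>l\<in>Fq n - {0}. \<Sum>x\<in>?N. chi (?f x) * chi (tr 1 (2*n) (l * (w * x))))"
    by (intro sum.cong refl Rl)
  also have "\<dots> = (\<Sum>x\<in>?N. chi (?f x) * (\<Sum>l\<in>Fq n - {0}. chi (tr 1 (2*n) (l * (w * x)))))"
    by (subst sum.swap) (simp add: sum_distrib_left)
  also have "\<dots> = (\<Sum>x\<in>?N. chi (?f x) * (if w * x \<in> Fq n then ?q - 1 else -1))"
    by (intro sum.cong refl) (simp add: charFq')
  also have "\<dots> = ?q * (\<Sum>x\<in>{x\<in>?N. w * x \<in> Fq n}. chi (?f x)) - (\<Sum>x\<in>?N. chi (?f x))"
    (is "?L = _")
  proof -
    have "?L = (\<Sum>x\<in>?N. ?q * (if w * x \<in> Fq n then chi (?f x) else 0) - chi (?f x))"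
      by (intro sum.cong refl) (simp add: algebra_simps)
    also have "\<dots> = ?q * (\<Sum>x\<in>?N. if w * x \<in> Fq n then chi (?f x) else 0) - (\<Sum>x\<in>?N. chi (?f x))"
      by (simp add: sum_subtractf sum_distrib_left)
    also have "(\<Sum>x\<in>?N. if w * x \<in> Fq n then chi (?f x) else 0) = (\<Sum>x\<in>{x\<in>?N. w * x \<in> Fq n}. chi (?f x))"
      by (subst sum.inter_filter) auto
    finally show ?thesis .
  qed
  finally have key: "(?q - 1) * R = ?q * (\<Sum>x\<in>{x\<in>?N. w * x \<in> Fq n}. chi (?f x)) - (?q - 1) * ?S"
    using sum_fibers[of G] by simp
  have qq: "(2::int)^(2*n) = ?q * ?q" by (simp add: mult_2 power_add)
  have Ssq: "?S * ?S = 1" using S by simp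
  show "(walsh (2*n) ?f w)^2 = 2^(2*n)"
  proof (cases "w = 0")
    case True
    hence "{x\<in>?N. w * x \<in> Fq n} = ?N" by auto
    hence "(?q - 1) * R = ?q * ((?q - 1) * ?S) - (?q - 1) * ?S" using key sum_fibers[of G] by simp
    hence "(?q - 1) * R = (?q - 1) * ((?q - 1) * ?S)" by (simp add: algebra_simps)
    hence "R = (?q - 1) * ?S" using q1 by simp
    hence "walsh (2*n) ?f w = ?q * ?S" using W S by (simp add: algebra_simps)
    hence "(walsh (2*n) ?f w)^2 = ?q * ?q * (?S * ?S)" by (simp add: power2_eq_square algebra_simps)
    thus ?thesis using Ssq qq by simp
  next
    case False
    let ?e = "chi (G (inverse w ^ (2^n-1)))"
    have "(\<Sum>x\<in>{x\<in>?N. w * x \<in> Fq n}. chi (?f x)) = (\<Sum>x\<in>{x\<in>?N. w * x \<in> Fq n}. ?e)"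
    proof (intro sum.cong refl)
      fix x assume x: "x \<in> {x\<in>?N. w * x \<in> Fq n}"
      hence "(w * x)^(2^n-1) = 1" using False by (intro Fq'_pow) auto
      hence "x^(2^n-1) = inverse w ^ (2^n-1)" using False
        by (simp add: power_mult_distrib power_inverse field_simps)
      thus "chi (?f x) = ?e" by simp
    qed
    also have "\<dots> = int (card {x\<in>?N. w * x \<in> Fq n}) * ?e" by simp
    also have "card {x\<in>?N. w * x \<in> Fq n} = card (Fq n - {0::'a})"
    proof -
      have "card {x\<in>?N. w * x \<in> Fq n} = (\<Sum>x\<in>{x\<in>?N. w * x \<in> Fq n}. (1::nat))" by simp
      also have "\<dots> = (\<Sum>x\<in>Fq n - {0::'a}. (1::nat))"
        by (rule reidx[where h="\<lambda>x. (1::nat)" and i="\<lambda>x. x / w" and j="\<lambda>x. w * x"]) (use False in auto)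
      finally show ?thesis by simp
    qed
    finally have Bv: "(\<Sum>x\<in>{x\<in>?N. w * x \<in> Fq n}. chi (?f x)) = (?q - 1) * ?e"
      by (simp only: cardFq'_int)
    have "(?q - 1) * R = ?q * ((?q - 1) * ?e) - (?q - 1) * ?S" using key[unfolded Bv] .
    hence "(?q - 1) * R = (?q - 1) * (?q * ?e - ?S)" by (simp add: algebra_simps)
    hence "R = ?q * ?e - ?S" using q1 by simp
    hence "walsh (2*n) ?f w = ?q * ?e" using W S by (simp add: algebra_simps)
    moreover have "?e * ?e = 1" by simp
    ultimately have "(walsh (2*n) ?f w)^2 = ?q * ?q * (?e * ?e)" by (simp add: power2_eq_square algebra_simps)
    thus ?thesis using qq by simp
  qed
qed

end



context gf begin

declare char2[simp]

lemma cancel2a: "(x::'a) + (y + x) = y" by (metis add.commute add.left_commute add_self add_0_right)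
lemma cancel2b: "(x::'a) + y + x = y" by (metis add.commute add.left_commute add_self add_0_right)
lemma cancel2c: "(x::'a) + (x + y) = y" by (metis add.assoc add_self add_0_left)

lemma charFqz: "(\<Sum>l\<in>Fq n. chi (tr 1 (2*n) (l * (z::'a)))) = (if z \<in> Fq n then 2^n else 0)"
proof -
  have "(\<Sum>l\<in>Fq n. chi (tr 1 (2*n) (l * z))) = (\<Sum>l\<in>Fq n. chi (tr 1 n (l * (z + cj n z))))"
    by (intro sum.cong refl) (simp add: tr_rel)
  also have "\<dots> = (if z + cj n z = 0 then 2^n else 0)" by (rule charFq[OF Fq_trace])
  finally show ?thesis by (simp add: Fq_iff2)
qed

lemma w0_ex: "\<exists>w::'a. w + cj n w = 1"
proof -
  have "Fq n \<noteq> (UNIV::'a set)"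
  proof
    assume "Fq n = (UNIV::'a set)"
    hence "(2::nat)^n = 2^(2*n)" using card_Fq cardF by simp
    moreover have "(2::nat)^n < 2^(2*n)" using n2 by (intro power_strict_increasing) auto
    ultimately show False by simp
  qed
  then obtain v :: 'a where v: "v \<notin> Fq n" by auto
  define D where "D = v + cj n v"
  have D0: "D \<noteq> 0" using v by (simp add: D_def Fq_iff2)
  have cD: "cj n D = D" by (simp add: D_def cj_add add.commute)
  have "v / D + cj n (v / D) = (v + cj n v) / D" by (simp add: cj_div cD add_divide_distrib)
  also have "\<dots> = 1" using D0 by (simp add: D_def)
  finally show ?thesis by blast
qed

definition w0 :: 'a where "w0 = (SOME w::'a. w + cj n w = 1)"

lemma w0_prop: "w0 + cj n w0 = 1"
  unfolding w0_def using w0_ex by (rule someI_ex)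

lemma cj_w0: "cj n w0 = 1 + w0"
proof -
  have "w0 + (w0 + cj n w0) = w0 + 1" using w0_prop by simp
  thus ?thesis by (simp only: cancel2c add.commute)
qed

lemma w0_notFq: "w0 \<notin> Fq n"
  using w0_prop by (auto simp: Fq_iff2)

lemma w0_l: "l \<in> Fq n \<Longrightarrow> w0 + l \<noteq> 0"
  using w0_notFq by (auto simp: add_eq0)

lemma U_nz: "y \<in> unit_circle n \<Longrightarrow> (y::'a) \<noteq> 0"
  by (auto simp: U_iff)

lemma U_cj: assumes "y \<in> unit_circle n" shows "cj n (y::'a) = 1 / y"
proof -
  have h: "y * cj n y = 1" using assms by (simp add: U_iff)
  hence "y \<noteq> 0" by auto
  thus ?thesis using h by (simp add: eq_divide_eq mult.commute)
qed

lemma T_U: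
  assumes bU: "b \<in> unit_circle n"
  shows "(\<Sum>y\<in>unit_circle n. chi (tr 1 (2*n) (a / (y + b)))) =
         1 + (if a * cj n b \<in> Fq n then 2^n * chi (tr 1 (2*n) (a * cj n b * w0)) else 0)"
proof -
  let ?U = "unit_circle n :: 'a set"
  have b0: "b \<noteq> 0" using bU U_nz by blast
  have cb: "cj n b = 1 / b" using U_cj[OF bU] .
  define z where "z = a * cj n b"
  define h where "h = (\<lambda>l. chi (tr 1 (2*n) (z * w0)) * chi (tr 1 (2*n) (l * z)))"
  define i where "i = (\<lambda>y::'a. b / (y + b) + w0)"
  define j where "j = (\<lambda>l::'a. 1 / (cj n b * (w0 + l)) + b)"
  have "(\<Sum>y\<in>?U. chi (tr 1 (2*n) (a / (y + b)))) = chi (tr 1 (2*n) (a / (b + b))) + (\<Sum>y\<in>?U - {b}. chi (tr 1 (2*n) (a / (y + b))))"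
    by (rule sum.remove) (use bU in auto)
  also have "chi (tr 1 (2*n) (a / (b + b))) = 1" by simp
  also have "(\<Sum>y\<in>?U - {b}. chi (tr 1 (2*n) (a / (y + b)))) = (\<Sum>y\<in>?U - {b}. h (i y))"
  proof (intro sum.cong refl)
    fix y assume y: "y \<in> ?U - {b}"
    hence yb: "y + b \<noteq> 0" by (auto simp: add_eq0)
    have "z * w0 + i y * z = z * (w0 + (b / (y + b) + w0))" by (simp add: i_def algebra_simps)
    also have "w0 + (b / (y + b) + w0) = b / (y + b)" by (rule cancel2a)
    also have "z * (b / (y + b)) = a / (y + b)" using b0 by (simp add: z_def cb)
    finally have "a / (y + b) = z * w0 + i y * z" by simp
    thus "chi (tr 1 (2*n) (a / (y + b))) = h (i y)"
      by (simp add: h_def tr_add chi_add trF_isb)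
  qed
  also have "\<dots> = (\<Sum>l\<in>Fq n. h l)"
  proof (rule reidx[where i=j])
    fix y assume y: "y \<in> ?U - {b}"
    hence yb: "y + b \<noteq> 0" by (auto simp: add_eq0)
    have "w0 + i y = b / (y + b)" unfolding i_def by (rule cancel2a)
    hence "cj n b * (w0 + i y) = 1 / (y + b)" using b0 by (simp add: cb)
    hence "j (i y) = y + b + b" using yb by (simp add: j_def)
    thus "j (i y) = y" by (simp add: add.assoc)
    have y0: "y \<noteq> 0" using y U_nz by blast
    have cy: "cj n y = 1 / y" using y U_cj by blast
    have "cj n (i y) = (1/b) / (1/y + 1/b) + (1 + w0)"
      by (simp add: i_def cj_add cj_div cb cy cj_w0)
    also have "(1/b) / (1/y + 1/b) = y / (y + b)" using y0 b0 yb
      by (simp add: field_simps)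
    also have "y / (y + b) + (1 + w0) = (y + (y + b)) / (y + b) + w0"
    proof -
      have "(y + (y + b)) / (y + b) = y / (y + b) + 1" using yb by (simp add: field_simps)
      thus ?thesis by (simp add: add.assoc)
    qed
    also have "y + (y + b) = b" by (rule cancel2c)
    finally show "i y \<in> Fq n" by (simp add: Fq_iff i_def)
  next
    fix l :: 'a assume l: "l \<in> Fq n"
    have u0: "w0 + l \<noteq> 0" using w0_l[OF l] .
    have cb0: "cj n b \<noteq> 0" using b0 by simp
    have "j l + b = 1 / (cj n b * (w0 + l))" by (simp add: j_def add.assoc)
    hence "b / (j l + b) = b * cj n b * (w0 + l)" by simp
    also have "b * cj n b = 1" using b0 by (simp add: cb)
    finally show "i (j l) = l" by (simp add: i_def cancel2b add.commute)
    define zz where "zz = cj n b * (w0 + l)"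
    have zz0: "zz \<noteq> 0" using u0 cb0 by (simp add: zz_def)
    have cl: "cj n l = l" using l by (simp add: Fq_iff)
    have bz: "b * zz = w0 + l" using b0 by (simp add: zz_def cb)
    have "cj n b * cj n zz = cj n (b * zz)" by (simp add: cj_mult)
    also have "\<dots> = cj n w0 + l" by (simp only: bz cj_add cl)
    also have "\<dots> = w0 + l + 1" by (simp add: cj_w0 add_ac)
    finally have cbz: "cj n b * cj n zz = w0 + l + 1" .
    have u1: "w0 + l + 1 \<noteq> 0"
    proof
      assume "w0 + l + 1 = 0"
      hence "cj n w0 + l = 0" by (simp add: cj_w0 algebra_simps)
      hence "cj n w0 \<in> Fq n" using l by (simp add: add_eq0)
      hence "w0 \<in> Fq n" by (simp add: Fq_iff)
      thus False using w0_notFq by simp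
    qed
    have czz0: "cj n zz \<noteq> 0" using zz0 by simp
    have "j l * cj n (j l) = (1/zz + b) * (1/cj n zz + cj n b)"
      by (simp add: j_def zz_def cj_add cj_div)
    also have "\<dots> = ((1 + b * zz) * (1 + cj n b * cj n zz)) / (zz * cj n zz)"
    proof -
      have "1/zz + b = (1 + b*zz)/zz" using zz0 by (simp add: field_simps)
      moreover have "1/cj n zz + cj n b = (1 + cj n b * cj n zz)/cj n zz" using czz0 by (simp add: field_simps)
      ultimately show ?thesis by simp
    qed
    also have "(1 + b * zz) * (1 + cj n b * cj n zz) = (1 + (w0 + l)) * (w0 + l)"
      by (simp only: bz cbz cancel2a)
    also have "zz * cj n zz = (b * zz) * (cj n b * cj n zz)"
    proof -
      have bcb: "b * cj n b = 1" using b0 by (simp add: cb)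
      have "(b * zz) * (cj n b * cj n zz) = (b * cj n b) * (zz * cj n zz)" by (simp only: mult_ac)
      thus ?thesis using bcb by simp
    qed
    also have "\<dots> = (w0 + l) * (w0 + l + 1)" by (simp only: bz cbz)
    also have "(w0 + l) * (w0 + l + 1) = (1 + (w0 + l)) * (w0 + l)" by (simp only: mult_ac add_ac)
    finally have "j l * cj n (j l) = 1" using u0 u1 by (simp add: add.commute)
    moreover have "j l \<noteq> b" using zz0 by (simp add: j_def zz_def[symmetric])
    ultimately show "j l \<in> ?U - {b}" by (simp add: U_iff)
  qed
  also have "\<dots> = chi (tr 1 (2*n) (z * w0)) * (\<Sum>l\<in>Fq n. chi (tr 1 (2*n) (l * z)))"
    by (simp add: h_def sum_distrib_left)
  also have "\<dots> = (if z \<in> Fq n then 2^n * chi (tr 1 (2*n) (z * w0)) else 0)"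
    by (simp add: charFqz)
  finally show ?thesis by (simp add: z_def)
qed

end



context gf begin

lemma sum_U_int: "int (card (unit_circle n :: 'a set)) = 2^n + 1"
proof -
  have "card (unit_circle n :: 'a set) = 2^n + 1" using counts by blast
  thus ?thesis by simp
qed

lemma normsum:
  assumes mu: "mu \<in> Fq n" "mu \<noteq> 0"
  shows "(\<Sum>y\<in>UNIV. chi (tr 1 n (mu * (y * cj n (y::'a))))) = - (2^n)"
proof -
  let ?N = "UNIV - {0::'a}"
  let ?g = "\<lambda>y::'a. chi (tr 1 n (mu * y^(2^n+1)))"
  have "(\<Sum>y\<in>UNIV. chi (tr 1 n (mu * (y * cj n (y::'a))))) = (\<Sum>y\<in>UNIV. ?g y)"
    by (simp add: norm_eq)
  also have "\<dots> = ?g 0 + (\<Sum>y\<in>?N. ?g y)" by (rule sum.remove) auto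
  also have "?g 0 = 1" by (simp add: power_0_left)
  also have "(\<Sum>y\<in>?N. ?g y) = (\<Sum>t\<in>(\<lambda>y. y^(2^n+1)) ` ?N. (\<Sum>y\<in>{y. y \<in> ?N \<and> y^(2^n+1) = t}. ?g y))"
    by (rule sum.image_gen) simp
  also have "\<dots> = (\<Sum>t\<in>Fq n - {0}. (2^n + 1) * chi (tr 1 n (t * mu)))"
  proof (rule sum.cong)
    show "(\<lambda>y. y^(2^n+1)) ` ?N = Fq n - {0}" using counts by simp
  next
    fix t :: 'a assume t: "t \<in> Fq n - {0}"
    have "(\<Sum>y\<in>{y. y \<in> ?N \<and> y^(2^n+1) = t}. ?g y) = (\<Sum>y\<in>{y. y \<in> ?N \<and> y^(2^n+1) = t}. chi (tr 1 n (t * mu)))"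
      by (intro sum.cong) (auto simp: mult.commute)
    also have "\<dots> = int (card {y::'a. y \<noteq> 0 \<and> y^(2^n+1) = t}) * chi (tr 1 n (t * mu))" by simp
    also have "card {y::'a. y \<noteq> 0 \<and> y^(2^n+1) = t} = 2^n + 1" using fib2 t by simp
    finally show "(\<Sum>y\<in>{y. y \<in> ?N \<and> y^(2^n+1) = t}. ?g y) = (2^n + 1) * chi (tr 1 n (t * mu))" by simp
  qed
  also have "\<dots> = (2^n + 1) * (\<Sum>t\<in>Fq n - {0}. chi (tr 1 n (t * mu)))" by (simp add: sum_distrib_left)
  also have "(\<Sum>t\<in>Fq n - {0}. chi (tr 1 n (t * mu))) = (\<Sum>t\<in>Fq n. chi (tr 1 n (t * mu))) - 1"
    by (subst sum_diff1) auto
  also have "(\<Sum>t\<in>Fq n. chi (tr 1 n (t * mu))) = 0" using charFq[OF mu(1)] mu(2) by simp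
  finally show ?thesis by simp
qed

lemma gauss:
  assumes mu: "mu \<in> Fq n" "mu \<noteq> 0"
  shows "(\<Sum>x\<in>UNIV. chi (tr 1 n (mu * (x * cj n x)) + tr 1 (2*n) (c * (x::'a)))) =
         - (2^n) * chi (tr 1 n (c * cj n c / mu))"
proof -
  define d where "d = cj n c / mu"
  have cmu: "cj n mu = mu" using mu by (simp add: Fq_iff)
  have cd: "cj n d = c / mu" by (simp add: d_def cj_div cmu)
  let ?E = "\<lambda>x. chi (tr 1 n (mu * (x * cj n x)) + tr 1 (2*n) (c * (x::'a)))"
  have "(\<Sum>x\<in>UNIV. ?E x) = (\<Sum>y\<in>UNIV. ?E (y + d))"
    by (rule reidx[where h="?E" and j="\<lambda>y. y + d" and i="\<lambda>y. y + d", symmetric]) (auto simp: add.assoc)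
  also have "\<dots> = (\<Sum>y\<in>UNIV. chi (tr 1 n (mu * (y * cj n y))) * chi (tr 1 n (c * cj n c / mu)))"
  proof (intro sum.cong refl)
    fix y :: 'a
    have md: "mu * d = cj n c" using mu(2) by (simp add: d_def)
    have dc: "d * c = c * cj n c / mu" by (simp add: d_def)
    have "mu * ((y + d) * cj n (y + d)) = mu * (y * cj n y) + c * y + (mu * d) * cj n y + d * c"
      using mu(2) by (simp add: cj_add cd field_simps)
    also have "\<dots> = mu * (y * cj n y) + (c * y + cj n (c * y)) + c * cj n c / mu"
      by (simp add: md dc cj_mult add_ac)
    finally have e1: "mu * ((y + d) * cj n (y + d)) = mu * (y * cj n y) + (c * y + cj n (c * y)) + c * cj n c / mu" .
    have e2: "tr 1 n (c * y) + tr 1 n (cj n (c * y)) = tr 1 (2*n) (c * y)"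
      using tr_rel[of 1 "c * y"] by (simp add: tr_add)
    have e3: "tr 1 (2*n) (c * d) = 0"
    proof -
      have "c * d = c * cj n c / mu" by (simp add: d_def)
      moreover have "c * cj n c / mu \<in> Fq n" using mu by (simp add: Fq_div Fq_norm)
      ultimately show ?thesis by (simp add: trF_Fq)
    qed
    have f1: "tr 1 n (mu * ((y + d) * cj n (y + d))) = tr 1 n (mu * (y * cj n y)) + tr 1 (2*n) (c * y) + tr 1 n (c * cj n c / mu)"
      by (simp only: e1 tr_add e2)
    have f2: "tr 1 (2*n) (c * (y + d)) = tr 1 (2*n) (c * y)"
      by (simp only: distrib_left tr_add e3 add_0_right)
    have "tr 1 n (mu * ((y + d) * cj n (y + d))) + tr 1 (2*n) (c * (y + d))
        = tr 1 n (mu * (y * cj n y)) + tr 1 n (c * cj n c / mu)"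
      unfolding f1 f2 by (simp add: add_ac cancel2c)
    thus "?E (y + d) = chi (tr 1 n (mu * (y * cj n y))) * chi (tr 1 n (c * cj n c / mu))"
      using mu by (simp add: chi_add tr_Fq_isb Fq_mult Fq_norm Fq_div)
  qed
  also have "\<dots> = chi (tr 1 n (c * cj n c / mu)) * (\<Sum>y\<in>UNIV. chi (tr 1 n (mu * (y * cj n y))))"
    by (simp add: sum_distrib_left mult.commute)
  also have "\<dots> = - (2^n) * chi (tr 1 n (c * cj n c / mu))" using normsum[OF mu] by simp
  finally show ?thesis .
qed

end



context gf begin

lemma kl_sum:
  assumes c0: "c \<noteq> 0"
  shows "(\<Sum>v\<in>unit_circle n. chi (tr 1 (2*n) (c * (v::'a)))) = 1 - kloost n (c * cj n c)"
proof -
  let ?U = "unit_circle n :: 'a set"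
  define N0 where "N0 = c * cj n c"
  have N0F: "N0 \<in> Fq n" by (simp add: N0_def Fq_norm)
  have kl: "(\<Sum>mu\<in>Fq n - {0}. chi (tr 1 n (mu + N0 / mu))) = kloost n N0 - 1"
  proof -
    have "kloost n N0 = chi (tr 1 n (inverse (0::'a) + N0 * 0)) + (\<Sum>x\<in>Fq n - {0}. chi (tr 1 n (inverse x + N0 * x)))"
      unfolding kloost_def by (rule sum.remove) auto
    also have "(\<Sum>x\<in>Fq n - {0}. chi (tr 1 n (inverse x + N0 * x))) = (\<Sum>mu\<in>Fq n - {0}. chi (tr 1 n (mu + N0 / mu)))"
    proof -
      have "(\<Sum>mu\<in>Fq n - {0}. chi (tr 1 n (mu + N0 / mu))) =
            (\<Sum>mu\<in>Fq n - {0}. (\<lambda>x. chi (tr 1 n (inverse x + N0 * x))) (inverse mu))"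
        by (intro sum.cong refl) (simp add: divide_inverse)
      also have "\<dots> = (\<Sum>x\<in>Fq n - {0}. chi (tr 1 n (inverse x + N0 * x)))"
        by (rule reidx[where i=inverse]) (auto simp: Fq_iff cj_def power_inverse)
      finally show ?thesis by simp
    qed
    finally show ?thesis by simp
  qed
  let ?Gs = "\<lambda>mu. (\<Sum>x\<in>UNIV. chi (tr 1 n (mu * (x * cj n x)) + tr 1 (2*n) (c * (x::'a))))"
  have "2^n * (\<Sum>v\<in>?U. chi (tr 1 (2*n) (c * v))) = (\<Sum>x\<in>UNIV. if x \<in> ?U then 2^n * chi (tr 1 (2*n) (c * x)) else 0)"
    by (simp add: sum_distrib_left sum.If_cases Int_def)
  also have "\<dots> = (\<Sum>x\<in>UNIV. \<Sum>mu\<in>Fq n. chi (tr 1 n (mu * (x * cj n x)) + tr 1 (2*n) (c * x)) * chi (tr 1 n mu))"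
  proof (intro sum.cong refl)
    fix x :: 'a
    have "(\<Sum>mu\<in>Fq n. chi (tr 1 n (mu * (x * cj n x + 1)))) = (if x * cj n x + 1 = 0 then 2^n else 0)"
      by (rule charFq) (simp add: Fq_add Fq_norm)
    also have "(x * cj n x + 1 = 0) = (x \<in> ?U)" by (simp add: add_eq0 U_iff)
    finally have ind: "(\<Sum>mu\<in>Fq n. chi (tr 1 n (mu * (x * cj n x + 1)))) = (if x \<in> ?U then 2^n else 0)" .
    have "(if x \<in> ?U then 2^n * chi (tr 1 (2*n) (c * x)) else 0) =
          (\<Sum>mu\<in>Fq n. chi (tr 1 n (mu * (x * cj n x + 1)))) * chi (tr 1 (2*n) (c * x))"
      by (simp add: ind)
    also have "\<dots> = (\<Sum>mu\<in>Fq n. chi (tr 1 n (mu * (x * cj n x)) + tr 1 (2*n) (c * x)) * chi (tr 1 n mu))"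
      unfolding sum_distrib_right
    proof (intro sum.cong refl)
      fix mu :: 'a assume mu: "mu \<in> Fq n"
      have i1: "isb (tr 1 n (mu * (x * cj n x)))" using mu by (intro tr_Fq_isb Fq_mult Fq_norm)
      have i2: "isb (tr 1 n mu)" using mu by (rule tr_Fq_isb)
      have i3: "isb (tr 1 (2*n) (c * x))" by (rule trF_isb)
      show "chi (tr 1 n (mu * (x * cj n x + 1))) * chi (tr 1 (2*n) (c * x)) =
            chi (tr 1 n (mu * (x * cj n x)) + tr 1 (2*n) (c * x)) * chi (tr 1 n mu)"
        using i1 i2 i3 by (simp add: distrib_left tr_add chi_add)
    qed
    finally show "(if x \<in> ?U then 2^n * chi (tr 1 (2*n) (c * x)) else 0) =
        (\<Sum>mu\<in>Fq n. chi (tr 1 n (mu * (x * cj n x)) + tr 1 (2*n) (c * x)) * chi (tr 1 n mu))" .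
  qed
  also have "\<dots> = (\<Sum>mu\<in>Fq n. chi (tr 1 n mu) * ?Gs mu)"
    by (subst sum.swap) (simp add: sum_distrib_left mult.commute)
  also have "\<dots> = chi (tr 1 n (0::'a)) * ?Gs 0 + (\<Sum>mu\<in>Fq n - {0}. chi (tr 1 n mu) * ?Gs mu)"
    by (rule sum.remove) auto
  also have "?Gs 0 = 0"
  proof -
    have "?Gs 0 = (\<Sum>x\<in>UNIV. chi (tr 1 (2*n) (c * x)))" by simp
    also have "\<dots> = 0" using charF[of c] c0 by simp
    finally show ?thesis .
  qed
  also have "(\<Sum>mu\<in>Fq n - {0}. chi (tr 1 n mu) * ?Gs mu) = (\<Sum>mu\<in>Fq n - {0}. - (2^n) * chi (tr 1 n (mu + N0 / mu)))"
  proof (intro sum.cong refl)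
    fix mu :: 'a assume mu: "mu \<in> Fq n - {0}"
    have "?Gs mu = - (2^n) * chi (tr 1 n (N0 / mu))" unfolding N0_def using mu by (intro gauss) auto
    moreover have "chi (tr 1 n mu) * chi (tr 1 n (N0 / mu)) = chi (tr 1 n (mu + N0 / mu))"
      using mu N0F by (simp add: tr_add chi_add tr_Fq_isb Fq_div)
    ultimately show "chi (tr 1 n mu) * ?Gs mu = - (2^n) * chi (tr 1 n (mu + N0 / mu))"
      by (simp add: algebra_simps)
  qed
  also have "\<dots> = - (2^n) * (kloost n N0 - 1)"
    by (simp only: sum_distrib_left[symmetric] kl add_0_left mult_zero_right)
  finally have "2^n * (\<Sum>v\<in>?U. chi (tr 1 (2*n) (c * v))) = 2^n * (1 - kloost n N0)"
    by (simp add: algebra_simps)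
  thus ?thesis by (simp add: N0_def)
qed

end



context gf begin

lemma notU_facts:
  fixes b y :: 'a
  assumes bU: "b \<notin> unit_circle n" and y: "y \<in> unit_circle n"
  shows "y + b \<noteq> 0" "1 + cj n b * y \<noteq> 0" "1 + b * cj n b \<noteq> (0::'a)" "y \<noteq> 0"
proof -
  show "y + b \<noteq> 0" using bU y by (auto simp: add_eq0)
  show "y \<noteq> 0" using y U_nz by blast
  show "1 + b * cj n b \<noteq> 0" using bU by (metis add_eq0 U_iff)
  show "1 + cj n b * y \<noteq> 0"
  proof
    assume "1 + cj n b * y = 0"
    hence h: "cj n b * y = 1" by (simp add: add_eq0)
    have cy: "cj n y = 1 / y" using U_cj[OF y] .
    have "cj n (cj n b * y) = 1" using h by simp
    hence "b * (1 / y) = 1" by (simp add: cj_mult cy)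
    hence "b = y" using \<open>y \<noteq> 0\<close> by (simp add: field_simps)
    thus False using bU y by simp
  qed
qed

lemma psi_plus:
  fixes b y :: 'a
  assumes bU: "b \<notin> unit_circle n" and y: "y \<in> unit_circle n"
  shows "(1 + cj n b * y) / (y + b) + cj n b = (1 + b * cj n b) / (y + b)"
proof -
  note f = notU_facts[OF bU y]
  have d: "(1 + cj n b * y) / (y + b) * (y + b) = 1 + cj n b * y" using f by simp
  have "((1 + cj n b * y) / (y + b) + cj n b) * (y + b) = 1 + cj n b * y + cj n b * (y + b)"
    by (simp only: distrib_right d)
  also have "\<dots> = 1 + b * cj n b" by (simp add: algebra_simps cancel2c)
  finally show ?thesis using f by (simp add: eq_divide_eq)
qed

lemma psiU:
  fixes b y :: 'a
  assumes bU: "b \<notin> unit_circle n" and y: "y \<in> unit_circle n"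
  shows "(1 + cj n b * y) / (y + b) \<in> unit_circle n"
proof -
  note f = notU_facts[OF bU y]
  have cy: "cj n y = 1 / y" using U_cj[OF y] .
  have "cj n ((1 + cj n b * y) / (y + b)) = (1 + b * (1/y)) / (1/y + cj n b)"
    by (simp add: cj_div cj_add cj_mult cy)
  also have "1 + b * (1/y) = (y + b) / y" using f by (simp add: field_simps)
  also have "1/y + cj n b = (1 + cj n b * y) / y" using f by (simp add: field_simps)
  also have "((y + b) / y) / ((1 + cj n b * y) / y) = (y + b) / (1 + cj n b * y)" using f by simp
  finally show ?thesis using f by (simp add: U_iff)
qed

lemma psi_inv:
  fixes b y :: 'a
  assumes bU: "b \<notin> unit_circle n" and y: "y \<in> unit_circle n"
  shows "(1 + b * ((1 + cj n b * y) / (y + b))) / ((1 + cj n b * y) / (y + b) + cj n b) = y"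
proof -
  note f = notU_facts[OF bU y]
  have d: "(1 + cj n b * y) / (y + b) * (y + b) = 1 + cj n b * y" using f by simp
  have "(1 + b * ((1 + cj n b * y) / (y + b))) * (y + b) = (y + b) + b * (1 + cj n b * y)"
    by (simp only: distrib_right mult_1_left mult.assoc d)
  also have "\<dots> = y * (1 + b * cj n b)" by (simp add: algebra_simps cancel2c)
  finally have e1: "1 + b * ((1 + cj n b * y) / (y + b)) = y * (1 + b * cj n b) / (y + b)"
    using f by (simp add: eq_divide_eq)
  show ?thesis unfolding e1 psi_plus[OF bU y] using f by simp
qed

lemma cjb_notU: "(b::'a) \<notin> unit_circle n \<Longrightarrow> cj n b \<notin> unit_circle n"
  by (simp add: U_iff mult.commute)

lemma T_notU:
  fixes a b :: 'a
  assumes bU: "b \<notin> unit_circle n" and a0: "a \<noteq> 0"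
  shows "(\<Sum>y\<in>unit_circle n. chi (tr 1 (2*n) (a / (y + b)))) =
    chi (tr 1 (2*n) (cj n a * b / (1 + b * cj n b))) * (1 - kloost n (a * cj n a / (1 + b^2 * (cj n b)^2)))"
proof -
  let ?U = "unit_circle n :: 'a set"
  define g where "g = 1 + b * cj n b"
  have g0: "g \<noteq> 0" using bU unfolding g_def by (metis add_eq0 U_iff)
  have cg: "cj n g = g" by (simp add: g_def cj_add cj_mult mult.commute)
  define psi where "psi = (\<lambda>y. (1 + cj n b * y) / (y + b))"
  define psi' where "psi' = (\<lambda>v. (1 + b * v) / (v + cj n b))"
  define h where "h = (\<lambda>v. chi (tr 1 (2*n) (a * cj n b / g)) * chi (tr 1 (2*n) ((a / g) * v)))"
  have cbU: "cj n b \<notin> ?U" using cjb_notU[OF bU] .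
  have "(\<Sum>y\<in>?U. chi (tr 1 (2*n) (a / (y + b)))) = (\<Sum>y\<in>?U. h (psi y))"
  proof (intro sum.cong refl)
    fix y assume y: "y \<in> ?U"
    note f = notU_facts[OF bU y]
    have "a * cj n b / g + (a / g) * psi y = (a / g) * (psi y + cj n b)" by (simp add: algebra_simps)
    also have "psi y + cj n b = g / (y + b)" unfolding psi_def g_def by (rule psi_plus[OF bU y])
    also have "(a / g) * (g / (y + b)) = a / (y + b)" using g0 by simp
    finally have "a / (y + b) = a * cj n b / g + (a / g) * psi y" by simp
    thus "chi (tr 1 (2*n) (a / (y + b))) = h (psi y)"
      by (simp add: h_def tr_add chi_add trF_isb)
  qed
  also have "\<dots> = (\<Sum>v\<in>?U. h v)"
  proof (rule reidx[where i=psi'])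
    fix y assume y: "y \<in> ?U"
    show "psi' (psi y) = y" unfolding psi_def psi'_def by (rule psi_inv[OF bU y])
    show "psi y \<in> ?U" unfolding psi_def by (rule psiU[OF bU y])
  next
    fix v assume v: "v \<in> ?U"
    show "psi (psi' v) = v" unfolding psi_def psi'_def using psi_inv[OF cbU v] by simp
    show "psi' v \<in> ?U" unfolding psi'_def using psiU[OF cbU v] by simp
  qed
  also have "\<dots> = chi (tr 1 (2*n) (a * cj n b / g)) * (\<Sum>v\<in>?U. chi (tr 1 (2*n) ((a / g) * v)))"
    by (simp add: h_def sum_distrib_left)
  also have "(\<Sum>v\<in>?U. chi (tr 1 (2*n) ((a / g) * v))) = 1 - kloost n ((a / g) * cj n (a / g))"
    by (rule kl_sum) (use a0 g0 in simp)
  also have "(a / g) * cj n (a / g) = a * cj n a / (1 + b^2 * (cj n b)^2)"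
  proof -
    have "g * g = g^2" by (simp add: power2_eq_square)
    also have "\<dots> = 1 + b^2 * (cj n b)^2" by (simp add: g_def sq_add power_mult_distrib)
    finally show ?thesis by (simp add: cj_div cg)
  qed
  also have "tr 1 (2*n) (a * cj n b / g) = tr 1 (2*n) (cj n a * b / g)"
    using tr_cj[of "a * cj n b / g"] by (simp add: cj_div cj_mult cg)
  finally show ?thesis by (simp add: g_def)
qed

end



context gf begin

lemma maj:
  assumes "isb (t1::'a)" "isb t2" "isb t3"
  shows "2 * chi (t1*t2 + t1*t3 + t2*t3) = chi t1 + chi t2 + chi t3 - chi (t1 + t2 + t3)"
  using assms unfolding isb_def by (elim disjE) (simp_all add: add.assoc)

lemma chi_pair: "isb (x::'a) \<Longrightarrow> isb y \<Longrightarrow> x + y = 1 \<Longrightarrow> chi x + chi y = 0"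
  unfolding isb_def by auto

lemma tr_w0: "z \<in> Fq n \<Longrightarrow> tr 1 (2*n) (z * w0) = tr 1 n (z::'a)"
  using tr_rel[of z w0] by (simp add: w0_prop)

lemma sqnorm:
  assumes bU: "b \<in> unit_circle n" and F: "a * cj n b \<in> Fq n"
  shows "a * cj n a = (a * cj n (b::'a))^2"
proof -
  have bb: "b * cj n b = 1" using bU by (simp add: U_iff)
  have "cj n (a * cj n b) = a * cj n b" using F by (simp add: Fq_iff)
  hence e: "cj n a * b = a * cj n b" by (simp add: cj_mult)
  have "a * cj n a = a * cj n a * (b * cj n b)" by (simp add: bb)
  also have "\<dots> = a * (cj n a * b) * cj n b" by (simp only: mult_ac)
  also have "\<dots> = (a * cj n b)^2" by (simp only: e) (simp add: power2_eq_square mult_ac)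
  finally show ?thesis .
qed

end

theorem theorem3:
  fixes n :: nat and a1 a2 a3 b :: "'a::{field,finite}"
  assumes n: "n > 2"
    and card: "card (UNIV :: 'a set) = 2 ^ (2 * n)"
    and a1: "a1 \<in> Fq n" "a1 \<noteq> 0"
    and a23: "a2 \<noteq> 0" "a3 \<noteq> 0"
    and dist: "a1 \<noteq> a2" "a1 \<noteq> a3" "a2 \<noteq> a3"
    and sum: "a1 + a2 + a3 \<noteq> 0"
    and b: "b \<noteq> 0"
    and conds:
      "(b = 1 \<and> a2 \<in> Fq n \<and> a3 \<notin> Fq n \<and> tr 1 n (a1 + a2) = 1)
     \<or> (b = 1 \<and> a2 \<notin> Fq n \<and> a3 \<notin> Fq n \<and> a2 + a3 \<in> Fq n
          \<and> tr 1 n (a2 + a3) = 0 \<and> tr 1 (2 * n) a2 = 0)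
     \<or> (b \<in> unit_circle n - {1} \<and> tr n (2 * n) (a2 * cj n b) = 0
          \<and> tr n (2 * n) (a3 * cj n b) = 0
          \<and> tr 1 n (a2 * cj n a2 + a3 * cj n a3) = 1 \<and> h3 n a1 a2 a3 b 0 = 0)
     \<or> (b \<in> unit_circle n - {1} \<and> tr n (2 * n) (a2 * cj n b) = 0
          \<and> tr n (2 * n) (a3 * cj n b) \<noteq> 0
          \<and> tr n (2 * n) ((a1 + a2 + a3) * cj n b) = 0
          \<and> tr 1 n (a2 * cj n a2) = tr 1 n ((a1 + a2 + a3) * (a1 + cj n a2 + cj n a3))
          \<and> h3 n a1 a2 a3 b 0 = 0)
     \<or> (b \<in> unit_circle n - {1} \<and> tr n (2 * n) (a2 * cj n b) \<noteq> 0
          \<and> tr n (2 * n) (a3 * cj n b) \<noteq> 0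
          \<and> tr n (2 * n) ((a1 + a2 + a3) * cj n b) \<noteq> 0
          \<and> h3 n a1 a2 a3 b 0 = 0)
     \<or> (b \<notin> unit_circle n \<and>
          (let k = (\<lambda>x. kloost n (x * cj n x / (1 + b\<^sup>2 * (cj n b)\<^sup>2)));
               u = (\<lambda>x. tr 1 (2 * n) (cj n x * b / (1 + b * cj n b)))
           in 2 * chi (h3 n a1 a2 a3 b 0) =
                2 * chi (u a1 * u a2 + u a1 * u a3 + u a2 * u a3)
                + chi (u (a1 + a2 + a3)) * k (a1 + a2 + a3)
                - (\<Sum>a\<in>{a1, a2, a3}. chi (u a) * k a)))"
  shows "bent (2 * n) (h3 n a1 a2 a3 b)"
proof -
  interpret gf n a1 by unfold_locales (use n card in auto)
  let ?U = "unit_circle n :: 'a set"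
  define t where "t = (\<lambda>a y. tr 1 (2*n) (a / (y + b)))"
  define G where "G = (\<lambda>y. t a1 y * t a2 y + t a1 y * t a3 y + t a2 y * t a3 y)"
  define s where "s = a1 + a2 + a3"
  define T where "T = (\<lambda>a. \<Sum>y\<in>?U. chi (t a y))"
  have hG: "h3 n a1 a2 a3 b = (\<lambda>x. G (x^(2^n-1)))" by (rule ext) (simp add: h3_def ff_def G_def t_def)
  have qpos: "(2::nat)^n - 1 \<noteq> 0" using q_ge by linarith
  have h0: "h3 n a1 a2 a3 b 0 = G 0" unfolding hG using qpos by (simp add: power_0_left)
  have isbt: "\<And>a y. isb (t a y)" by (simp add: t_def trF_isb)
  have isbG: "\<And>y. isb (G y)" unfolding G_def by (intro isb_add isb_mult isbt)
  have ts: "\<And>y. t s y = t a1 y + t a2 y + t a3 y" by (simp add: t_def s_def add_divide_distrib tr_add)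
  have S2: "2 * (\<Sum>y\<in>?U. chi (G y)) = T a1 + T a2 + T a3 - T s"
  proof -
    have "2 * (\<Sum>y\<in>?U. chi (G y)) = (\<Sum>y\<in>?U. chi (t a1 y) + chi (t a2 y) + chi (t a3 y) - chi (t s y))"
      unfolding sum_distrib_left by (intro sum.cong refl) (simp add: G_def ts maj isbt)
    thus ?thesis by (simp add: T_def sum.distrib sum_subtractf)
  qed
  have key: "2 * (\<Sum>y\<in>?U. chi (G y)) = 2 * chi (G 0)"
  proof (cases "b \<in> ?U")
    case True
    define E where "E = (\<lambda>a. if a * cj n b \<in> Fq n then chi (tr 1 n (a * cj n b)) else 0)"
    have TE: "T a = 1 + 2^n * E a" for a
    proof -
      have "T a = 1 + (if a * cj n b \<in> Fq n then 2^n * chi (tr 1 (2*n) (a * cj n b * w0)) else 0)"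
        unfolding T_def t_def by (rule T_U[OF True])
      also have "\<dots> = 1 + 2^n * E a" by (simp add: E_def tr_w0)
      finally show ?thesis .
    qed
    have b0: "b \<noteq> 0" using True U_nz by blast
    have cb: "cj n b = 1 / b" using U_cj[OF True] .
    have t0: "t a 0 = tr 1 (2*n) (a * cj n b)" for a by (simp add: t_def cb)
    have EF: "a * cj n b \<notin> Fq n \<Longrightarrow> E a = 0" for a by (simp add: E_def)
    have EF': "a * cj n b \<in> Fq n \<Longrightarrow> E a = chi (tr 1 n (a * cj n b))" for a by (simp add: E_def)
    have trnnF: "tr n (2*n) x = 0 \<longleftrightarrow> x \<in> Fq n" for x :: 'a by (simp add: trnn Fq_iff2)
    have sc: "s * cj n b = a1 * cj n b + (a2 * cj n b + a3 * cj n b)" by (simp add: s_def algebra_simps)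
    have A1: "a1 * cj n b \<notin> Fq n" if b1: "b \<noteq> 1"
    proof
      assume "a1 * cj n b \<in> Fq n"
      hence "cj n (a1 * cj n b) = a1 * cj n b" by (simp add: Fq_iff)
      hence "a1 * b = a1 * cj n b" using a1 by (simp add: cj_mult Fq_iff)
      hence "b = cj n b" using a1 by simp
      hence "b * b = 1" using True by (simp add: U_iff)
      moreover have "(b + 1)^2 = b * b + 1" using sq_add[of b 1] by (simp add: power2_eq_square)
      ultimately have "(b + 1)^2 = 0" by simp
      hence "b + 1 = 0" by simp
      hence "b = 1" by (simp add: add_eq0)
      thus False using b1 by simp
    qed
    have main: "E a1 + E a2 + E a3 = E s \<and> G 0 = 0"
      using conds
    proof (elim disjE conjE)
      assume c: "b = 1" "a2 \<in> Fq n" "a3 \<notin> Fq n" "tr 1 n (a1 + a2) = 1"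
      have sF: "s \<notin> Fq n"
      proof
        assume "s \<in> Fq n"
        hence "s + (a1 + a2) \<in> Fq n" using a1 c by (intro Fq_add) auto
        moreover have "s + (a1 + a2) = a3" by (simp add: s_def add_ac cancel2c)
        ultimately show False using c by simp
      qed
      have "E a1 + E a2 = 0"
        using c a1 by (simp add: E_def tr_add chi_pair tr_Fq_isb)
      moreover have "E a3 = 0" "E s = 0" using c sF by (simp_all add: E_def)
      moreover have "G 0 = 0" using c a1 by (simp add: G_def t0 trF_Fq)
      ultimately show ?thesis by simp
    next
      assume c: "b = 1" "a2 \<notin> Fq n" "a3 \<notin> Fq n" "a2 + a3 \<in> Fq n" "tr 1 n (a2 + a3) = 0" "tr 1 (2 * n) a2 = 0"
      have "s \<in> Fq n" using a1 c by (simp add: s_def add.assoc Fq_add)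
      hence "E s = chi (tr 1 n a1 + tr 1 n (a2 + a3))" using c by (simp add: E_def s_def add.assoc tr_add)
      hence "E s = E a1" using c a1 by (simp add: E_def)
      moreover have "E a2 = 0" "E a3 = 0" using c by (simp_all add: E_def)
      moreover have "G 0 = 0" using c a1 by (simp add: G_def t0 trF_Fq)
      ultimately show ?thesis by simp
    next
      assume c: "b \<in> unit_circle n - {1}" "tr n (2 * n) (a2 * cj n b) = 0" "tr n (2 * n) (a3 * cj n b) = 0"
        "tr 1 n (a2 * cj n a2 + a3 * cj n a3) = 1" "h3 n a1 a2 a3 b 0 = 0"
      have F2: "a2 * cj n b \<in> Fq n" and F3: "a3 * cj n b \<in> Fq n" using c trnnF by auto
      have A: "a1 * cj n b \<notin> Fq n" using A1 c by auto
      have "s * cj n b \<notin> Fq n"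
      proof
        assume "s * cj n b \<in> Fq n"
        hence "s * cj n b + (a2 * cj n b + a3 * cj n b) \<in> Fq n" using F2 F3 by (intro Fq_add)
        moreover have "s * cj n b + (a2 * cj n b + a3 * cj n b) = a1 * cj n b" by (simp add: sc add_ac cancel2c)
        ultimately show False using A by simp
      qed
      hence "E s = 0" "E a1 = 0" using A by (simp_all add: E_def)
      moreover have "E a2 + E a3 = 0"
      proof -
        have "tr 1 n (a2 * cj n b) + tr 1 n (a3 * cj n b) = 1"
          using c(4) sqnorm[OF True F2] sqnorm[OF True F3] F2 F3 by (simp add: tr_add tr_Fq_sq)
        thus ?thesis using F2 F3 by (simp add: E_def chi_pair tr_Fq_isb)
      qed
      moreover have "G 0 = 0" using c h0 by simp
      ultimately show ?thesis by simp
    next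
      assume c: "b \<in> unit_circle n - {1}" "tr n (2 * n) (a2 * cj n b) = 0" "tr n (2 * n) (a3 * cj n b) \<noteq> 0"
        "tr n (2 * n) ((a1 + a2 + a3) * cj n b) = 0"
        "tr 1 n (a2 * cj n a2) = tr 1 n ((a1 + a2 + a3) * (a1 + cj n a2 + cj n a3))" "h3 n a1 a2 a3 b 0 = 0"
      have F2: "a2 * cj n b \<in> Fq n" and F3: "a3 * cj n b \<notin> Fq n" and Fs: "s * cj n b \<in> Fq n"
        using c trnnF by (auto simp: s_def)
      have A: "a1 * cj n b \<notin> Fq n" using A1 c by auto
      have "cj n s = a1 + cj n a2 + cj n a3" using a1 by (simp add: s_def cj_add Fq_iff)
      hence "tr 1 n (a2 * cj n b) = tr 1 n (s * cj n b)"
        using c(5) sqnorm[OF True F2] sqnorm[OF True Fs] F2 Fs by (simp add: tr_Fq_sq s_def)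
      hence "E a2 = E s" using F2 Fs by (simp add: E_def)
      moreover have "E a1 = 0" "E a3 = 0" using A F3 by (simp_all add: E_def)
      moreover have "G 0 = 0" using c h0 by simp
      ultimately show ?thesis by simp
    next
      assume c: "b \<in> unit_circle n - {1}" "tr n (2 * n) (a2 * cj n b) \<noteq> 0"
          "tr n (2 * n) (a3 * cj n b) \<noteq> 0" "tr n (2 * n) ((a1 + a2 + a3) * cj n b) \<noteq> 0" "h3 n a1 a2 a3 b 0 = 0"
      have "a2 * cj n b \<notin> Fq n" "a3 * cj n b \<notin> Fq n" "s * cj n b \<notin> Fq n"
        using c trnnF by (auto simp: s_def)
      moreover have "a1 * cj n b \<notin> Fq n" using A1 c by auto
      ultimately have "E a1 = 0" "E a2 = 0" "E a3 = 0" "E s = 0" by (simp_all add: E_def)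
      moreover have "G 0 = 0" using c h0 by simp
      ultimately show ?thesis by simp
    next
      assume "b \<notin> unit_circle n"
      thus ?thesis using True by simp
    qed
    have "2 * (\<Sum>y\<in>?U. chi (G y)) = 2 + 2^n * (E a1 + E a2 + E a3 - E s)"
      unfolding S2 TE by (simp add: algebra_simps)
    also have "\<dots> = 2 * chi (G 0)" using main by simp
    finally show ?thesis .
  next
    case False
    define u where "u = (\<lambda>x. tr 1 (2 * n) (cj n x * b / (1 + b * cj n b)))"
    define k where "k = (\<lambda>x. kloost n (x * cj n x / (1 + b\<^sup>2 * (cj n b)\<^sup>2)))"
    have TK: "a \<noteq> 0 \<Longrightarrow> T a = chi (u a) * (1 - k a)" for a
      unfolding T_def t_def u_def k_def by (rule T_notU[OF False])
    have us: "u s = u a1 + u a2 + u a3"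
      by (simp add: u_def s_def cj_add distrib_right add_divide_distrib tr_add)
    have isbu: "isb (u a)" for a by (simp add: u_def trF_isb)
    have b1: "b \<noteq> 1" using False by (auto simp: U_iff)
    have c6: "2 * chi (h3 n a1 a2 a3 b 0) = 2 * chi (u a1 * u a2 + u a1 * u a3 + u a2 * u a3)
                + chi (u s) * k s - (\<Sum>a\<in>{a1, a2, a3}. chi (u a) * k a)"
      using conds False b1 by (auto simp: u_def k_def s_def Let_def unit_circle_def)
    have sum3: "(\<Sum>a\<in>{a1, a2, a3}. chi (u a) * k a) = chi (u a1) * k a1 + chi (u a2) * k a2 + chi (u a3) * k a3"
      using dist by simp
    have m: "2 * chi (u a1 * u a2 + u a1 * u a3 + u a2 * u a3) = chi (u a1) + chi (u a2) + chi (u a3) - chi (u s)"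
      unfolding us by (intro maj isbu)
    have s0: "s \<noteq> 0" using sum by (simp add: s_def)
    have "2 * (\<Sum>y\<in>?U. chi (G y)) = chi (u a1) * (1 - k a1) + chi (u a2) * (1 - k a2) + chi (u a3) * (1 - k a3) - chi (u s) * (1 - k s)"
      unfolding S2 using TK a1 a23 s0 by simp
    also have "\<dots> = 2 * chi (h3 n a1 a2 a3 b 0)"
      unfolding c6 sum3 m by (simp add: algebra_simps)
    finally show ?thesis using h0 by simp
  qed
  hence "(\<Sum>y\<in>?U. chi (G y)) = chi (G 0)" by simp
  hence "bent (2*n) (\<lambda>x. G (x^(2^n-1)))" by (intro bent_crit isbG)
  thus ?thesis using hG by simp
qed


end
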